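(* For any graphs $G$ and $H$, $A_1(G\,\square\, H)\cong A_1(G)\times A_1(H)$, where $G\,\square\,H$ is the Cartesian product graph.
   Context: All graphs are connected, simple and locally finite. The Cartesian product $G\,\square\,H$ has vertex set $V(G)\times V(H)$, with $(g,h)\sim(g',h')$ iff ($g=g'$ and $h\sim h'$) or ($h=h'$ and $g\sim g'$). $A_1$ is the discrete fundamental group: for base vertex $v_0$, elements are classes of graph maps $f:\mathbb{Z}\to G$ ($\mathbb{Z}$ the path graph on the integers) with $f(i)=v_0$ for $|i|\ge r_f$ ($r_f$ minimal), modulo based homotopy (a graph map $h:\mathbb{Z}\,\square\, I_m\to G$, $I_m$ the path on $\{0,\dots,m\}$, with $h(\cdot,0)=f$, $h(\cdot,m)=g$, each $h(\cdot,j)$ based); product by concatenation $p(i)=f(i+r_f)$ for $i\le0$, $p(i)=g(i-r_g)$ for $i\ge0$. *)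

theory Defs
  imports "HOL-Algebra.Group"
begin

definition simple_graph :: "'a set \<Rightarrow> ('a \<Rightarrow> 'a \<Rightarrow> bool) \<Rightarrow> bool" where
  "simple_graph V E \<longleftrightarrow>
     (\<forall>x y. E x y \<longrightarrow> x \<in> V \<and> y \<in> V) \<and>
     (\<forall>x. \<not> E x x) \<and>
     (\<forall>x y. E x y \<longrightarrow> E y x)"

definition connected_graph :: "'a set \<Rightarrow> ('a \<Rightarrow> 'a \<Rightarrow> bool) \<Rightarrow> bool" where
  "connected_graph V E \<longleftrightarrow> V \<noteq> {} \<and> (\<forall>x\<in>V. \<forall>y\<in>V. E\<^sup>*\<^sup>* x y)"

definition locally_finite :: "'a set \<Rightarrow> ('a \<Rightarrow> 'a \<Rightarrow> bool) \<Rightarrow> bool" where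
  "locally_finite V E \<longleftrightarrow> (\<forall>x\<in>V. finite {y. E x y})"

definition graph :: "'a set \<Rightarrow> ('a \<Rightarrow> 'a \<Rightarrow> bool) \<Rightarrow> bool" where
  "graph V E \<longleftrightarrow> simple_graph V E \<and> connected_graph V E \<and> locally_finite V E"

definition cart_V :: "'a set \<Rightarrow> 'b set \<Rightarrow> ('a \<times> 'b) set" where
  "cart_V V W = V \<times> W"

definition cart_E :: "('a \<Rightarrow> 'a \<Rightarrow> bool) \<Rightarrow> ('b \<Rightarrow> 'b \<Rightarrow> bool)
    \<Rightarrow> ('a \<times> 'b) \<Rightarrow> ('a \<times> 'b) \<Rightarrow> bool" where
  "cart_E E F = (\<lambda>(g,h) (g',h'). (g = g' \<and> F h h') \<or> (h = h' \<and> E g g'))"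

text \<open>Graph maps send adjacent vertices to adjacent or equal vertices.
  A based loop is a graph map from the integer path graph that equals the
  base vertex outside a finite window.\<close>

definition adj_or_eq :: "('a \<Rightarrow> 'a \<Rightarrow> bool) \<Rightarrow> 'a \<Rightarrow> 'a \<Rightarrow> bool" where
  "adj_or_eq E x y \<longleftrightarrow> x = y \<or> E x y"

definition based_loop :: "'a set \<Rightarrow> ('a \<Rightarrow> 'a \<Rightarrow> bool) \<Rightarrow> 'a \<Rightarrow> (int \<Rightarrow> 'a) \<Rightarrow> bool" where
  "based_loop V E v0 f \<longleftrightarrow>
     (\<forall>i. f i \<in> V) \<and>
     (\<forall>i. adj_or_eq E (f i) (f (i + 1))) \<and>
     (\<exists>r::nat. \<forall>i. \<bar>i\<bar> \<ge> int r \<longrightarrow> f i = v0)"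

definition loop_radius :: "'a \<Rightarrow> (int \<Rightarrow> 'a) \<Rightarrow> nat" where
  "loop_radius v0 f = (LEAST r::nat. \<forall>i. \<bar>i\<bar> \<ge> int r \<longrightarrow> f i = v0)"

text \<open>Based homotopy: a graph map from the product of the integer path
  with the path I_m on {0..m}, each row being a based loop.\<close>

definition based_homotopic :: "'a set \<Rightarrow> ('a \<Rightarrow> 'a \<Rightarrow> bool) \<Rightarrow> 'a
    \<Rightarrow> (int \<Rightarrow> 'a) \<Rightarrow> (int \<Rightarrow> 'a) \<Rightarrow> bool" where
  "based_homotopic V E v0 f g \<longleftrightarrow>
     (\<exists>(m::nat) (h :: int \<Rightarrow> nat \<Rightarrow> 'a).
        (\<forall>i. h i 0 = f i) \<and> (\<forall>i. h i m = g i) \<and>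
        (\<forall>j\<le>m. based_loop V E v0 (\<lambda>i. h i j)) \<and>
        (\<forall>i. \<forall>j<m. adj_or_eq E (h i j) (h i (Suc j))))"

definition loop_concat :: "'a \<Rightarrow> (int \<Rightarrow> 'a) \<Rightarrow> (int \<Rightarrow> 'a) \<Rightarrow> (int \<Rightarrow> 'a)" where
  "loop_concat v0 f g =
     (\<lambda>i. if i \<le> 0 then f (i + int (loop_radius v0 f))
          else g (i - int (loop_radius v0 g)))"

definition loop_class :: "'a set \<Rightarrow> ('a \<Rightarrow> 'a \<Rightarrow> bool) \<Rightarrow> 'a
    \<Rightarrow> (int \<Rightarrow> 'a) \<Rightarrow> (int \<Rightarrow> 'a) set" where
  "loop_class V E v0 f = {g. based_loop V E v0 g \<and> based_homotopic V E v0 f g}"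

definition A1 :: "'a set \<Rightarrow> ('a \<Rightarrow> 'a \<Rightarrow> bool) \<Rightarrow> 'a \<Rightarrow> (int \<Rightarrow> 'a) set monoid" where
  "A1 V E v0 =
     \<lparr> carrier = loop_class V E v0 ` {f. based_loop V E v0 f},
       mult = (\<lambda>X Y. loop_class V E v0
                 (loop_concat v0 (SOME f. f \<in> X) (SOME g. g \<in> Y))),
       one = loop_class V E v0 (\<lambda>_. v0) \<rparr>"

end

theory Submission
  imports Defs
begin


definition bnd :: "'a \<Rightarrow> (int \<Rightarrow> 'a) \<Rightarrow> nat \<Rightarrow> bool" where
  "bnd v0 f R \<longleftrightarrow> (\<forall>i. \<bar>i\<bar> \<ge> int R \<longrightarrow> f i = v0)"

definition cc :: "nat \<Rightarrow> nat \<Rightarrow> (int \<Rightarrow> 'a) \<Rightarrow> (int \<Rightarrow> 'a) \<Rightarrow> int \<Rightarrow> 'a" where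
  "cc R1 R2 f g = (\<lambda>i. if i \<le> 0 then f (i + int R1) else g (i - int R2))"

lemma bnd_mono: "bnd v0 f R \<Longrightarrow> R \<le> R' \<Longrightarrow> bnd v0 f R'"
  unfolding bnd_def by force

lemma family:
  assumes "\<And>j. j \<le> m \<Longrightarrow> based_loop V E v0 (\<psi> j)"
    and "\<And>i j. j < m \<Longrightarrow> adj_or_eq E (\<psi> j i) (\<psi> (Suc j) i)"
  shows "based_homotopic V E v0 (\<psi> 0) (\<psi> m)"
  unfolding based_homotopic_def
  apply (rule exI[of _ m], rule exI[of _ "\<lambda>i j. \<psi> j i"])
  using assms by auto

lemma hmt_refl: "based_loop V E v0 f \<Longrightarrow> based_homotopic V E v0 f f"
  using family[of 0 V E v0 "\<lambda>_. f"] by auto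

lemma adj_sym: "\<forall>x y. E x y \<longrightarrow> E y x \<Longrightarrow> adj_or_eq E x y \<Longrightarrow> adj_or_eq E y x"
  unfolding adj_or_eq_def by auto

lemma hmt_sym:
  assumes s: "\<forall>x y. E x y \<longrightarrow> E y x" and h: "based_homotopic V E v0 f g"
  shows "based_homotopic V E v0 g f"
proof -
  obtain m h where h: "\<forall>i. h i 0 = f i" "\<forall>i. h i m = g i"
    "\<forall>j\<le>m. based_loop V E v0 (\<lambda>i. h i j)" "\<forall>i. \<forall>j<m. adj_or_eq E (h i j) (h i (Suc j))"
    using h unfolding based_homotopic_def by blast
  have "based_homotopic V E v0 (\<lambda>i. h i (m - 0)) (\<lambda>i. h i (m - m))"
  proof (rule family)
    fix j assume "j \<le> m" thus "based_loop V E v0 (\<lambda>i. h i (m - j))" using h(3) by auto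
  next
    fix i j assume j: "j < m"
    have X: "adj_or_eq E (h i (m - Suc j)) (h i (Suc (m - Suc j)))" using h(4) j by auto
    have Y: "Suc (m - Suc j) = m - j" using j by auto
    have "adj_or_eq E (h i (m - Suc j)) (h i (m - j))" using X unfolding Y .
    thus "adj_or_eq E (h i (m - j)) (h i (m - Suc j))" by (rule adj_sym[OF s])
  qed
  thus ?thesis using h(1,2) by simp
qed

lemma hmt_trans:
  assumes "based_homotopic V E v0 f g" "based_homotopic V E v0 g k"
  shows "based_homotopic V E v0 f k"
proof -
  obtain m1 h1 where h1: "\<forall>i. h1 i 0 = f i" "\<forall>i. h1 i m1 = g i"
    "\<forall>j\<le>m1. based_loop V E v0 (\<lambda>i. h1 i j)" "\<forall>i. \<forall>j<m1. adj_or_eq E (h1 i j) (h1 i (Suc j))"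
    using assms(1) unfolding based_homotopic_def by blast
  obtain m2 h2 where h2: "\<forall>i. h2 i 0 = g i" "\<forall>i. h2 i m2 = k i"
    "\<forall>j\<le>m2. based_loop V E v0 (\<lambda>i. h2 i j)" "\<forall>i. \<forall>j<m2. adj_or_eq E (h2 i j) (h2 i (Suc j))"
    using assms(2) unfolding based_homotopic_def by blast
  define \<psi> where "\<psi> j = (if j \<le> m1 then (\<lambda>i. h1 i j) else (\<lambda>i. h2 i (j - m1)))" for j
  have "based_homotopic V E v0 (\<psi> 0) (\<psi> (m1 + m2))"
  proof (rule family)
    fix j assume "j \<le> m1 + m2" thus "based_loop V E v0 (\<psi> j)" using h1(3) h2(3) by (auto simp: \<psi>_def)
  next
    fix i j assume j: "j < m1 + m2"
    show "adj_or_eq E (\<psi> j i) (\<psi> (Suc j) i)"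
    proof (cases "j < m1")
      case True
      hence "\<psi> j i = h1 i j" "\<psi> (Suc j) i = h1 i (Suc j)" by (simp_all add: \<psi>_def)
      thus ?thesis using h1(4)[rule_format, OF True] by simp
    next
      case F1: False
      show ?thesis
      proof (cases "j = m1")
        case True
        have m2: "0 < m2" using j True by simp
        have "\<psi> j i = h1 i m1" using True by (simp add: \<psi>_def)
        also have "\<dots> = h2 i 0" using h1(2) h2(1) by simp
        finally have "\<psi> j i = h2 i 0" .
        moreover have "\<psi> (Suc j) i = h2 i (Suc 0)" using True by (simp add: \<psi>_def)
        ultimately show ?thesis using h2(4)[rule_format, OF m2] by simp
      next
        case F2: False
        have jj: "j - m1 < m2" using j F1 by simp
        have "\<psi> j i = h2 i (j - m1)" using F1 F2 by (simp add: \<psi>_def)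
        moreover have "\<psi> (Suc j) i = h2 i (Suc (j - m1))" using F1 F2 by (simp add: \<psi>_def Suc_diff_le)
        ultimately show ?thesis using h2(4)[rule_format, OF jj] by simp
      qed
    qed
  qed
  moreover have "\<psi> 0 = f" "\<psi> (m1 + m2) = k" using h1 h2
    by (auto simp: \<psi>_def fun_eq_iff)
  ultimately show ?thesis by simp
qed

lemma hmt_based:
  assumes "based_homotopic V E v0 f g"
  shows "based_loop V E v0 f \<and> based_loop V E v0 g"
proof -
  obtain m :: nat and h :: "int \<Rightarrow> nat \<Rightarrow> 'a" where h: "\<forall>i. h i 0 = f i" "\<forall>i. h i m = g i"
    "\<forall>j\<le>m. based_loop V E v0 (\<lambda>i. h i j)"
    using assms unfolding based_homotopic_def by blast
  have e: "f = (\<lambda>i. h i 0)" "g = (\<lambda>i. h i m)" using h by auto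
  have "based_loop V E v0 (\<lambda>i. h i 0)" "based_loop V E v0 (\<lambda>i. h i m)" using h by auto
  thus ?thesis unfolding e by simp
qed

lemma based_bnd:
  assumes "based_loop V E v0 f" shows "bnd v0 f (loop_radius v0 f)"
proof -
  obtain r :: nat where "\<forall>i. \<bar>i\<bar> \<ge> int r \<longrightarrow> f i = v0" using assms unfolding based_loop_def by blast
  hence "\<forall>i. \<bar>i\<bar> \<ge> int (LEAST r::nat. \<forall>i. \<bar>i\<bar> \<ge> int r \<longrightarrow> f i = v0) \<longrightarrow> f i = v0"
    by (rule LeastI)
  thus ?thesis unfolding bnd_def loop_radius_def .
qed

lemma rad_le: "bnd v0 f R \<Longrightarrow> loop_radius v0 f \<le> R"
  unfolding bnd_def loop_radius_def by (simp add: Least_le)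

lemma based_ex_bnd: "based_loop V E v0 f \<Longrightarrow> \<exists>R. bnd v0 f R"
  by (blast dest: based_bnd)

lemma rows_bnd:
  fixes h :: "int \<Rightarrow> nat \<Rightarrow> 'a"
  assumes "\<forall>j\<le>m. based_loop V E v0 (\<lambda>i. h i j)"
  shows "\<exists>R. \<forall>j\<le>m. bnd v0 (\<lambda>i. h i j) R"
  using assms
proof (induction m)
  case 0
  hence b0: "based_loop V E v0 (\<lambda>i. h i 0)" by simp
  obtain R where "bnd v0 (\<lambda>i. h i 0) R" using based_ex_bnd[OF b0] by blast
  thus ?case by auto
next
  case (Suc m)
  then obtain R where R: "\<forall>j\<le>m. bnd v0 (\<lambda>i. h i j) R" by auto
  have b1: "based_loop V E v0 (\<lambda>i. h i (Suc m))" using Suc.prems by simp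
  obtain S where S: "bnd v0 (\<lambda>i. h i (Suc m)) S" using based_ex_bnd[OF b1] by blast
  have "\<forall>j\<le>Suc m. bnd v0 (\<lambda>i. h i j) (max R S)"
  proof (intro allI impI)
    fix j assume "j \<le> Suc m"
    hence "j \<le> m \<or> j = Suc m" by auto
    thus "bnd v0 (\<lambda>i. h i j) (max R S)"
    proof
      assume "j \<le> m" thus ?thesis using R bnd_mono[of v0 _ R "max R S"] by auto
    next
      assume "j = Suc m" thus ?thesis using S bnd_mono[of v0 _ S "max R S"] by auto
    qed
  qed
  thus ?case by blast
qed



lemma bl_V: "based_loop V E v0 f \<Longrightarrow> f i \<in> V"
  unfolding based_loop_def by auto
lemma bl_adj: "based_loop V E v0 f \<Longrightarrow> adj_or_eq E (f i) (f (i + 1))"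
  unfolding based_loop_def by auto

lemma based_loopI:
  assumes "\<And>i. f i \<in> V" "\<And>i. adj_or_eq E (f i) (f (i + 1))" "bnd v0 f R"
  shows "based_loop V E v0 f"
  using assms unfolding based_loop_def bnd_def by blast

lemma cc_based:
  assumes f: "based_loop V E v0 f" and g: "based_loop V E v0 g"
    and bf: "bnd v0 f R1" and bg: "bnd v0 g R2"
  shows "based_loop V E v0 (cc R1 R2 f g)"
proof (rule based_loopI)
  fix i show "cc R1 R2 f g i \<in> V" using bl_V[OF f] bl_V[OF g] by (simp add: cc_def)
next
  fix i
  show "adj_or_eq E (cc R1 R2 f g i) (cc R1 R2 f g (i + 1))"
  proof (cases "i \<le> -1")
    case True
    have "adj_or_eq E (f (i + int R1)) (f (i + int R1 + 1))" using bl_adj[OF f] .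
    moreover have "i + int R1 + 1 = i + 1 + int R1" by simp
    ultimately show ?thesis using True by (simp add: cc_def)
  next
    case False
    show ?thesis
    proof (cases "i = 0")
      case True
      have "f (int R1) = v0" using bf unfolding bnd_def by auto
      moreover have "g (- int R2) = v0" using bg unfolding bnd_def by auto
      moreover have "adj_or_eq E (g (- int R2)) (g (- int R2 + 1))" using bl_adj[OF g] .
      moreover have "- int R2 + 1 = 1 - int R2" by simp
      ultimately show ?thesis using True by (simp add: cc_def)
    next
      case F2: False
      have "adj_or_eq E (g (i - int R2)) (g (i - int R2 + 1))" using bl_adj[OF g] .
      moreover have "i - int R2 + 1 = i + 1 - int R2" by simp
      ultimately show ?thesis using False F2 by (simp add: cc_def)
    qed
  qed
next
  show "bnd v0 (cc R1 R2 f g) (2*R1 + 2*R2)"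
    unfolding bnd_def
  proof (intro allI impI)
    fix i :: int assume i: "int (2 * R1 + 2 * R2) \<le> \<bar>i\<bar>"
    show "cc R1 R2 f g i = v0"
    proof (cases "i \<le> 0")
      case True
      hence "\<bar>i + int R1\<bar> \<ge> int R1" using i by linarith
      thus ?thesis using True bf unfolding bnd_def cc_def by auto
    next
      case False
      hence "\<bar>i - int R2\<bar> \<ge> int R2" using i by linarith
      thus ?thesis using False bg unfolding bnd_def cc_def by auto
    qed
  qed
qed

lemma bnd_cc: "bnd v0 f R1 \<Longrightarrow> bnd v0 g R2 \<Longrightarrow> bnd v0 (cc R1 R2 f g) (2*R1 + 2*R2)"
proof -
  assume bf: "bnd v0 f R1" and bg: "bnd v0 g R2"
  show ?thesis unfolding bnd_def
  proof (intro allI impI)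
    fix i :: int assume i: "int (2 * R1 + 2 * R2) \<le> \<bar>i\<bar>"
    show "cc R1 R2 f g i = v0"
    proof (cases "i \<le> 0")
      case True
      hence "\<bar>i + int R1\<bar> \<ge> int R1" using i by linarith
      thus ?thesis using True bf unfolding bnd_def cc_def by auto
    next
      case False
      hence "\<bar>i - int R2\<bar> \<ge> int R2" using i by linarith
      thus ?thesis using False bg unfolding bnd_def cc_def by auto
    qed
  qed
qed

lemma concat_cc: "loop_concat v0 f g = cc (loop_radius v0 f) (loop_radius v0 g) f g"
  unfolding loop_concat_def cc_def by simp

lemma pad1:
  assumes f: "based_loop V E v0 f" and g: "based_loop V E v0 g"
    and bf: "bnd v0 f R1" and bg: "bnd v0 g R2"
  shows "based_homotopic V E v0 (cc R1 R2 f g) (cc (R1 + k) R2 f g)"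
proof -
  have "based_homotopic V E v0 ((\<lambda>j. cc (R1 + j) R2 f g) 0) ((\<lambda>j. cc (R1 + j) R2 f g) k)"
  proof (rule family)
    fix j show "based_loop V E v0 (cc (R1 + j) R2 f g)"
      using cc_based[OF f g bnd_mono[OF bf, of "R1 + j"] bg] by simp
  next
    fix i j
    have X: "adj_or_eq E (f (i + int (R1 + j))) (f (i + int (R1 + j) + 1))" using bl_adj[OF f] .
    have Y: "i + int (R1 + j) + 1 = i + int (R1 + Suc j)" by simp
    have "adj_or_eq E (f (i + int (R1 + j))) (f (i + int (R1 + Suc j)))" using X unfolding Y .
    thus "adj_or_eq E (cc (R1 + j) R2 f g i) (cc (R1 + Suc j) R2 f g i)"
      by (auto simp: cc_def adj_or_eq_def)
  qed
  thus ?thesis by simp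
qed

lemma pad2:
  assumes s: "\<forall>x y. E x y \<longrightarrow> E y x"
    and f: "based_loop V E v0 f" and g: "based_loop V E v0 g"
    and bf: "bnd v0 f R1" and bg: "bnd v0 g R2"
  shows "based_homotopic V E v0 (cc R1 R2 f g) (cc R1 (R2 + k) f g)"
proof -
  have "based_homotopic V E v0 ((\<lambda>j. cc R1 (R2 + j) f g) 0) ((\<lambda>j. cc R1 (R2 + j) f g) k)"
  proof (rule family)
    fix j show "based_loop V E v0 (cc R1 (R2 + j) f g)"
      using cc_based[OF f g bf bnd_mono[OF bg, of "R2 + j"]] by simp
  next
    fix i j
    have X: "adj_or_eq E (g (i - int (R2 + Suc j))) (g (i - int (R2 + Suc j) + 1))" using bl_adj[OF g] .
    have Y: "i - int (R2 + Suc j) + 1 = i - int (R2 + j)" by simp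
    have "adj_or_eq E (g (i - int (R2 + Suc j))) (g (i - int (R2 + j)))" using X unfolding Y .
    hence "adj_or_eq E (g (i - int (R2 + j))) (g (i - int (R2 + Suc j)))" by (rule adj_sym[OF s])
    thus "adj_or_eq E (cc R1 (R2 + j) f g i) (cc R1 (R2 + Suc j) f g i)"
      by (simp add: cc_def adj_or_eq_def)
  qed
  thus ?thesis by simp
qed

lemma pad:
  assumes s: "\<forall>x y. E x y \<longrightarrow> E y x"
    and f: "based_loop V E v0 f" and g: "based_loop V E v0 g"
    and bf: "bnd v0 f R1" and bg: "bnd v0 g R2"
    and bf': "bnd v0 f R1'" and bg': "bnd v0 g R2'"
  shows "based_homotopic V E v0 (cc R1 R2 f g) (cc R1' R2' f g)"
proof -
  define M1 where "M1 = max R1 R1'"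
  define M2 where "M2 = max R2 R2'"
  have bM1: "bnd v0 f M1" using bnd_mono[OF bf, of M1] M1_def by simp
  have a: "based_homotopic V E v0 (cc R1 R2 f g) (cc M1 R2 f g)"
    using pad1[OF f g bf bg, of "M1 - R1"] M1_def by simp
  have b: "based_homotopic V E v0 (cc M1 R2 f g) (cc M1 M2 f g)"
    using pad2[OF s f g bM1 bg, of "M2 - R2"] M2_def by simp
  have c: "based_homotopic V E v0 (cc R1' R2' f g) (cc M1 R2' f g)"
    using pad1[OF f g bf' bg', of "M1 - R1'"] M1_def by simp
  have d: "based_homotopic V E v0 (cc M1 R2' f g) (cc M1 M2 f g)"
    using pad2[OF s f g bM1 bg', of "M2 - R2'"] M2_def by simp
  show ?thesis
    using hmt_trans[OF hmt_trans[OF a b] hmt_sym[OF s hmt_trans[OF c d]]] .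
qed

lemma shift:
  assumes a: "based_loop V E v0 a"
  shows "based_homotopic V E v0 a (\<lambda>i. a (i + int k))"
proof -
  obtain R where R: "bnd v0 a R" using based_ex_bnd[OF a] by blast
  have "based_homotopic V E v0 ((\<lambda>j i. a (i + int j)) 0) ((\<lambda>j i. a (i + int j)) k)"
  proof (rule family)
    fix j
    show "based_loop V E v0 (\<lambda>i. a (i + int j))"
    proof (rule based_loopI)
      fix i show "a (i + int j) \<in> V" using bl_V[OF a] .
      have "adj_or_eq E (a (i + int j)) (a (i + int j + 1))" using bl_adj[OF a] .
      thus "adj_or_eq E (a (i + int j)) (a (i + 1 + int j))" by (simp add: add_ac)
    next
      show "bnd v0 (\<lambda>i. a (i + int j)) (R + j)"
        unfolding bnd_def
      proof (intro allI impI)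
        fix i :: int assume "int (R + j) \<le> \<bar>i\<bar>"
        hence "int R \<le> \<bar>i + int j\<bar>" by linarith
        thus "a (i + int j) = v0" using R unfolding bnd_def by blast
      qed
    qed
  next
    fix i j
    have "adj_or_eq E (a (i + int j)) (a (i + int j + 1))" using bl_adj[OF a] .
    thus "adj_or_eq E (a (i + int j)) (a (i + int (Suc j)))" by (simp add: add_ac)
  qed
  thus ?thesis by simp
qed



lemma cong1:
  assumes s: "\<forall>x y. E x y \<longrightarrow> E y x"
    and h: "based_homotopic V E v0 f f'" and g: "based_loop V E v0 g"
  shows "based_homotopic V E v0 (loop_concat v0 f g) (loop_concat v0 f' g)"
proof -
  obtain m h where h: "\<forall>i. h i 0 = f i" "\<forall>i. h i m = f' i"
    "\<forall>j\<le>m. based_loop V E v0 (\<lambda>i. h i j)" "\<forall>i. \<forall>j<m. adj_or_eq E (h i j) (h i (Suc j))"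
    using h unfolding based_homotopic_def by blast
  obtain R where R: "\<forall>j\<le>m. bnd v0 (\<lambda>i. h i j) R" using rows_bnd[OF h(3)] by blast
  have fe: "(\<lambda>i. h i 0) = f" "(\<lambda>i. h i m) = f'" using h by auto
  have f: "based_loop V E v0 f" and f': "based_loop V E v0 f'" using hmt_based[OF assms(2)] by auto
  have bf: "bnd v0 f R" "bnd v0 f' R" using R[rule_format, of 0] R[rule_format, of m] fe by auto
  define R2 where "R2 = loop_radius v0 g"
  have bg: "bnd v0 g R2" using based_bnd[OF g] R2_def by simp
  have mid: "based_homotopic V E v0 ((\<lambda>j. cc R R2 (\<lambda>i. h i j) g) 0) ((\<lambda>j. cc R R2 (\<lambda>i. h i j) g) m)"
  proof (rule family)
    fix j assume "j \<le> m"
    thus "based_loop V E v0 (cc R R2 (\<lambda>i. h i j) g)" using cc_based[OF _ g _ bg, of "\<lambda>i. h i j" R] h(3) R by simp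
  next
    fix i j assume "j < m"
    thus "adj_or_eq E (cc R R2 (\<lambda>i. h i j) g i) (cc R R2 (\<lambda>i. h i (Suc j)) g i)"
      using h(4) by (simp add: cc_def adj_or_eq_def)
  qed
  hence mid: "based_homotopic V E v0 (cc R R2 f g) (cc R R2 f' g)" using fe by simp
  have p1: "based_homotopic V E v0 (cc (loop_radius v0 f) R2 f g) (cc R R2 f g)"
    using pad[OF s f g based_bnd[OF f] bg bf(1) bg] .
  have p2: "based_homotopic V E v0 (cc R R2 f' g) (cc (loop_radius v0 f') R2 f' g)"
    using pad[OF s f' g bf(2) bg based_bnd[OF f'] bg] .
  show ?thesis unfolding concat_cc R2_def[symmetric]
    using hmt_trans[OF hmt_trans[OF p1 mid] p2] .
qed

lemma cong2:
  assumes s: "\<forall>x y. E x y \<longrightarrow> E y x"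
    and h: "based_homotopic V E v0 g g'" and f: "based_loop V E v0 f"
  shows "based_homotopic V E v0 (loop_concat v0 f g) (loop_concat v0 f g')"
proof -
  obtain m h where h: "\<forall>i. h i 0 = g i" "\<forall>i. h i m = g' i"
    "\<forall>j\<le>m. based_loop V E v0 (\<lambda>i. h i j)" "\<forall>i. \<forall>j<m. adj_or_eq E (h i j) (h i (Suc j))"
    using h unfolding based_homotopic_def by blast
  obtain R where R: "\<forall>j\<le>m. bnd v0 (\<lambda>i. h i j) R" using rows_bnd[OF h(3)] by blast
  have fe: "(\<lambda>i. h i 0) = g" "(\<lambda>i. h i m) = g'" using h by auto
  have g: "based_loop V E v0 g" and g': "based_loop V E v0 g'" using hmt_based[OF assms(2)] by auto
  have bg: "bnd v0 g R" "bnd v0 g' R" using R[rule_format, of 0] R[rule_format, of m] fe by auto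
  define R1 where "R1 = loop_radius v0 f"
  have bf: "bnd v0 f R1" using based_bnd[OF f] R1_def by simp
  have mid: "based_homotopic V E v0 ((\<lambda>j. cc R1 R f (\<lambda>i. h i j)) 0) ((\<lambda>j. cc R1 R f (\<lambda>i. h i j)) m)"
  proof (rule family)
    fix j assume "j \<le> m"
    thus "based_loop V E v0 (cc R1 R f (\<lambda>i. h i j))" using cc_based[OF f _ bf, of "\<lambda>i. h i j" R] h(3) R by simp
  next
    fix i j assume "j < m"
    thus "adj_or_eq E (cc R1 R f (\<lambda>i. h i j) i) (cc R1 R f (\<lambda>i. h i (Suc j)) i)"
      using h(4) by (simp add: cc_def adj_or_eq_def)
  qed
  hence mid: "based_homotopic V E v0 (cc R1 R f g) (cc R1 R f g')" using fe by simp
  have p1: "based_homotopic V E v0 (cc R1 (loop_radius v0 g) f g) (cc R1 R f g)"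
    using pad[OF s f g bf based_bnd[OF g] bf bg(1)] .
  have p2: "based_homotopic V E v0 (cc R1 R f g') (cc R1 (loop_radius v0 g') f g')"
    using pad[OF s f g' bf bg(2) bf based_bnd[OF g']] .
  show ?thesis unfolding concat_cc R1_def[symmetric]
    using hmt_trans[OF hmt_trans[OF p1 mid] p2] .
qed

lemma cong:
  assumes s: "\<forall>x y. E x y \<longrightarrow> E y x"
    and h1: "based_homotopic V E v0 f f'" and h2: "based_homotopic V E v0 g g'"
  shows "based_homotopic V E v0 (loop_concat v0 f g) (loop_concat v0 f' g')"
proof -
  have a: "based_loop V E v0 f'" using hmt_based[OF h1] by simp
  have b: "based_loop V E v0 g" using hmt_based[OF h2] by simp
  show ?thesis using hmt_trans[OF cong1[OF s h1 b] cong2[OF s h2 a]] .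
qed

lemma concat_based:
  assumes "based_loop V E v0 f" "based_loop V E v0 g"
  shows "based_loop V E v0 (loop_concat v0 f g)"
  unfolding concat_cc using cc_based[OF assms based_bnd[OF assms(1)] based_bnd[OF assms(2)]] .

lemma class_eq:
  assumes s: "\<forall>x y. E x y \<longrightarrow> E y x" and fg: "based_homotopic V E v0 f g"
  shows "loop_class V E v0 f = loop_class V E v0 g"
proof -
  have gf: "based_homotopic V E v0 g f" using hmt_sym[OF s fg] .
  have "\<And>x. (based_loop V E v0 x \<and> based_homotopic V E v0 f x) = (based_loop V E v0 x \<and> based_homotopic V E v0 g x)"
  proof -
    fix x
    have "based_homotopic V E v0 f x \<Longrightarrow> based_homotopic V E v0 g x" by (rule hmt_trans[OF gf])
    moreover have "based_homotopic V E v0 g x \<Longrightarrow> based_homotopic V E v0 f x" by (rule hmt_trans[OF fg])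
    ultimately show "(based_loop V E v0 x \<and> based_homotopic V E v0 f x) = (based_loop V E v0 x \<and> based_homotopic V E v0 g x)" by blast
  qed
  thus ?thesis unfolding loop_class_def by simp
qed

lemma class_eqD:
  assumes g: "based_loop V E v0 g" and e: "loop_class V E v0 f = loop_class V E v0 g"
  shows "based_homotopic V E v0 f g"
proof -
  have "g \<in> loop_class V E v0 g" using g hmt_refl[OF g] unfolding loop_class_def by simp
  hence "g \<in> loop_class V E v0 f" using e by simp
  thus ?thesis unfolding loop_class_def by simp
qed

lemma rep_class:
  assumes "based_loop V E v0 f"
  shows "based_homotopic V E v0 f (SOME g. g \<in> loop_class V E v0 f)"
proof -
  have "f \<in> loop_class V E v0 f" using assms hmt_refl[OF assms] unfolding loop_class_def by simp
  hence "(SOME g. g \<in> loop_class V E v0 f) \<in> loop_class V E v0 f"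
    by (rule someI[of "\<lambda>g. g \<in> loop_class V E v0 f" f])
  thus ?thesis unfolding loop_class_def by simp
qed



lemma sym_cart:
  assumes "\<forall>x y. E x y \<longrightarrow> E y x" "\<forall>x y. F x y \<longrightarrow> F y x"
  shows "\<forall>x y. cart_E E F x y \<longrightarrow> cart_E E F y x"
  using assms unfolding cart_E_def by auto

lemma proj_adj1: "adj_or_eq (cart_E E F) x y \<Longrightarrow> adj_or_eq E (fst x) (fst y)"
  unfolding adj_or_eq_def cart_E_def by (cases x, cases y) auto

lemma proj_adj2: "adj_or_eq (cart_E E F) x y \<Longrightarrow> adj_or_eq F (snd x) (snd y)"
  unfolding adj_or_eq_def cart_E_def by (cases x, cases y) auto

lemma lift1: "adj_or_eq E x x' \<Longrightarrow> adj_or_eq (cart_E E F) (x, y) (x', y)"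
  unfolding adj_or_eq_def cart_E_def by auto

lemma lift2: "adj_or_eq F y y' \<Longrightarrow> adj_or_eq (cart_E E F) (x, y) (x, y')"
  unfolding adj_or_eq_def cart_E_def by auto

lemma proj_bnd1: "bnd (v0, w0) \<gamma> R \<Longrightarrow> bnd v0 (\<lambda>i. fst (\<gamma> i)) R"
  unfolding bnd_def by auto

lemma proj_bnd2: "bnd (v0, w0) \<gamma> R \<Longrightarrow> bnd w0 (\<lambda>i. snd (\<gamma> i)) R"
  unfolding bnd_def by auto

lemma proj_based1:
  assumes g: "based_loop (cart_V V W) (cart_E E F) (v0, w0) \<gamma>"
  shows "based_loop V E v0 (\<lambda>i. fst (\<gamma> i))"
proof -
  obtain R where R: "bnd (v0, w0) \<gamma> R" using based_ex_bnd[OF g] by blast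
  show ?thesis
  proof (rule based_loopI)
    fix i show "fst (\<gamma> i) \<in> V" using bl_V[OF g, of i] unfolding cart_V_def by auto
    show "adj_or_eq E (fst (\<gamma> i)) (fst (\<gamma> (i + 1)))" using proj_adj1[OF bl_adj[OF g]] .
  next
    show "bnd v0 (\<lambda>i. fst (\<gamma> i)) R" using proj_bnd1[OF R] .
  qed
qed

lemma proj_based2:
  assumes g: "based_loop (cart_V V W) (cart_E E F) (v0, w0) \<gamma>"
  shows "based_loop W F w0 (\<lambda>i. snd (\<gamma> i))"
proof -
  obtain R where R: "bnd (v0, w0) \<gamma> R" using based_ex_bnd[OF g] by blast
  show ?thesis
  proof (rule based_loopI)
    fix i show "snd (\<gamma> i) \<in> W" using bl_V[OF g, of i] unfolding cart_V_def by auto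
    show "adj_or_eq F (snd (\<gamma> i)) (snd (\<gamma> (i + 1)))" using proj_adj2[OF bl_adj[OF g]] .
  next
    show "bnd w0 (\<lambda>i. snd (\<gamma> i)) R" using proj_bnd2[OF R] .
  qed
qed

lemma proj_hmt1:
  assumes "based_homotopic (cart_V V W) (cart_E E F) (v0, w0) \<gamma> \<delta>"
  shows "based_homotopic V E v0 (\<lambda>i. fst (\<gamma> i)) (\<lambda>i. fst (\<delta> i))"
proof -
  obtain m :: nat and h :: "int \<Rightarrow> nat \<Rightarrow> 'a \<times> 'b" where h: "\<forall>i. h i 0 = \<gamma> i" "\<forall>i. h i m = \<delta> i"
    "\<forall>j\<le>m. based_loop (cart_V V W) (cart_E E F) (v0, w0) (\<lambda>i. h i j)"
    "\<forall>i. \<forall>j<m. adj_or_eq (cart_E E F) (h i j) (h i (Suc j))"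
    using assms unfolding based_homotopic_def by blast
  have "based_homotopic V E v0 ((\<lambda>j i. fst (h i j)) 0) ((\<lambda>j i. fst (h i j)) m)"
  proof (rule family)
    fix j assume "j \<le> m" thus "based_loop V E v0 (\<lambda>i. fst (h i j))"
      using proj_based1[of V W E F v0 w0 "\<lambda>i. h i j"] h(3) by simp
  next
    fix i j assume "j < m" thus "adj_or_eq E (fst (h i j)) (fst (h i (Suc j)))"
      using proj_adj1 h(4) by blast
  qed
  thus ?thesis using h(1,2) by simp
qed

lemma proj_hmt2:
  assumes "based_homotopic (cart_V V W) (cart_E E F) (v0, w0) \<gamma> \<delta>"
  shows "based_homotopic W F w0 (\<lambda>i. snd (\<gamma> i)) (\<lambda>i. snd (\<delta> i))"
proof -
  obtain m :: nat and h :: "int \<Rightarrow> nat \<Rightarrow> 'a \<times> 'b" where h: "\<forall>i. h i 0 = \<gamma> i" "\<forall>i. h i m = \<delta> i"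
    "\<forall>j\<le>m. based_loop (cart_V V W) (cart_E E F) (v0, w0) (\<lambda>i. h i j)"
    "\<forall>i. \<forall>j<m. adj_or_eq (cart_E E F) (h i j) (h i (Suc j))"
    using assms unfolding based_homotopic_def by blast
  have "based_homotopic W F w0 ((\<lambda>j i. snd (h i j)) 0) ((\<lambda>j i. snd (h i j)) m)"
  proof (rule family)
    fix j assume "j \<le> m" thus "based_loop W F w0 (\<lambda>i. snd (h i j))"
      using proj_based2[of V W E F v0 w0 "\<lambda>i. h i j"] h(3) by simp
  next
    fix i j assume "j < m" thus "adj_or_eq F (snd (h i j)) (snd (h i (Suc j)))"
      using proj_adj2 h(4) by blast
  qed
  thus ?thesis using h(1,2) by simp
qed

lemma proj_concat1:
  assumes s: "\<forall>x y. E x y \<longrightarrow> E y x"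
    and g: "based_loop (cart_V V W) (cart_E E F) (v0, w0) \<gamma>"
    and d: "based_loop (cart_V V W) (cart_E E F) (v0, w0) \<delta>"
  shows "based_homotopic V E v0 (\<lambda>i. fst (loop_concat (v0, w0) \<gamma> \<delta> i))
           (loop_concat v0 (\<lambda>i. fst (\<gamma> i)) (\<lambda>i. fst (\<delta> i)))"
proof -
  have e: "(\<lambda>i. fst (loop_concat (v0, w0) \<gamma> \<delta> i)) =
     cc (loop_radius (v0, w0) \<gamma>) (loop_radius (v0, w0) \<delta>) (\<lambda>i. fst (\<gamma> i)) (\<lambda>i. fst (\<delta> i))"
    unfolding concat_cc cc_def by auto
  have g1: "based_loop V E v0 (\<lambda>i. fst (\<gamma> i))" using proj_based1[OF g] .
  have d1: "based_loop V E v0 (\<lambda>i. fst (\<delta> i))" using proj_based1[OF d] .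
  show ?thesis unfolding e[unfolded concat_cc] concat_cc
    by (rule pad[OF s g1 d1 proj_bnd1[OF based_bnd[OF g]] proj_bnd1[OF based_bnd[OF d]]
        based_bnd[OF g1] based_bnd[OF d1]])
qed

lemma proj_concat2:
  assumes s: "\<forall>x y. F x y \<longrightarrow> F y x"
    and g: "based_loop (cart_V V W) (cart_E E F) (v0, w0) \<gamma>"
    and d: "based_loop (cart_V V W) (cart_E E F) (v0, w0) \<delta>"
  shows "based_homotopic W F w0 (\<lambda>i. snd (loop_concat (v0, w0) \<gamma> \<delta> i))
           (loop_concat w0 (\<lambda>i. snd (\<gamma> i)) (\<lambda>i. snd (\<delta> i)))"
proof -
  have e: "(\<lambda>i. snd (loop_concat (v0, w0) \<gamma> \<delta> i)) =
     cc (loop_radius (v0, w0) \<gamma>) (loop_radius (v0, w0) \<delta>) (\<lambda>i. snd (\<gamma> i)) (\<lambda>i. snd (\<delta> i))"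
    unfolding concat_cc cc_def by auto
  have g1: "based_loop W F w0 (\<lambda>i. snd (\<gamma> i))" using proj_based2[OF g] .
  have d1: "based_loop W F w0 (\<lambda>i. snd (\<delta> i))" using proj_based2[OF d] .
  show ?thesis unfolding e[unfolded concat_cc] concat_cc
    by (rule pad[OF s g1 d1 proj_bnd2[OF based_bnd[OF g]] proj_bnd2[OF based_bnd[OF d]]
        based_bnd[OF g1] based_bnd[OF d1]])
qed

lemma diag_step:
  assumes a: "based_loop V E v0 a" and b: "based_loop W F w0 b"
    and ba: "bnd v0 a R" and bb: "bnd w0 b R"
  shows "adj_or_eq (cart_E E F) (a (i + 2 * int R), b i) (a (i + 2 * int R + 1), b (i + 1))"
proof (cases "i + 2 * int R \<ge> int R")
  case True
  have "a (i + 2 * int R) = v0" "a (i + 2 * int R + 1) = v0" using ba True unfolding bnd_def by auto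
  thus ?thesis using lift2[OF bl_adj[OF b, of i]] by simp
next
  case False
  have "b i = w0" "b (i + 1) = w0" using bb False unfolding bnd_def by auto
  thus ?thesis using lift1[OF bl_adj[OF a, of "i + 2 * int R"]] by simp
qed

lemma tau_based:
  assumes a: "based_loop V E v0 a" and b: "based_loop W F w0 b"
    and ba: "bnd v0 a R" and bb: "bnd w0 b R"
  shows "based_loop (cart_V V W) (cart_E E F) (v0, w0) (\<lambda>i. (a (i + 2 * int R), b i))"
proof (rule based_loopI)
  fix i
  show "(a (i + 2 * int R), b i) \<in> cart_V V W" using bl_V[OF a] bl_V[OF b] unfolding cart_V_def by auto
  have Y: "i + 1 + 2 * int R = i + 2 * int R + 1" by simp
  show "adj_or_eq (cart_E E F) (a (i + 2 * int R), b i) (a (i + 1 + 2 * int R), b (i + 1))"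
    unfolding Y by (rule diag_step[OF a b ba bb, of i])
next
  show "bnd (v0, w0) (\<lambda>i. (a (i + 2 * int R), b i)) (3 * R)"
    unfolding bnd_def
  proof (intro allI impI)
    fix i :: int assume i: "int (3 * R) \<le> \<bar>i\<bar>"
    hence "int R \<le> \<bar>i + 2 * int R\<bar>" "int R \<le> \<bar>i\<bar>" by linarith+
    thus "(a (i + 2 * int R), b i) = (v0, w0)" using ba bb unfolding bnd_def by auto
  qed
qed



definition sf :: "int \<Rightarrow> int \<Rightarrow> int \<Rightarrow> int" where
  "sf r c i = max i (min (i + 2 * r) c)"

lemma A1: "0 \<le> r \<Longrightarrow> sf r c (i + 1) = sf r c i \<or> (sf r c i = i \<and> sf r c (i + 1) = i + 1)
   \<or> (sf r c i = i + 2 * r \<and> sf r c (i + 1) = i + 2 * r + 1)"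
  unfolding sf_def max_def min_def by auto

lemma A2: "sf r (c + 1) i = sf r c i \<or> sf r (c + 1) i = sf r c i + 1"
  unfolding sf_def max_def min_def by auto

lemma A3: "0 \<le> r \<Longrightarrow> - r \<le> c \<Longrightarrow> c \<le> 3 * r \<Longrightarrow> 5 * r \<le> \<bar>i\<bar> \<Longrightarrow> r \<le> \<bar>sf r c i\<bar> \<and> r \<le> \<bar>i\<bar>"
  unfolding sf_def max_def min_def by auto

lemma A4: "0 \<le> r \<Longrightarrow> sf r (- r) i = i \<or> (sf r (- r) i \<le> - r \<and> i \<le> - r)"
  unfolding sf_def max_def min_def by auto

lemma A5: "0 \<le> r \<Longrightarrow> sf r (3 * r) i = i + 2 * r \<or> (sf r (3 * r) i \<ge> r \<and> i + 2 * r \<ge> r)"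
  unfolding sf_def max_def min_def by auto

lemma sep:
  assumes g: "based_loop (cart_V V W) (cart_E E F) (v0, w0) \<gamma>"
    and R: "bnd (v0, w0) \<gamma> R"
  shows "based_homotopic (cart_V V W) (cart_E E F) (v0, w0) \<gamma>
           (\<lambda>i. (fst (\<gamma> (i + 2 * int R)), snd (\<gamma> i)))"
proof -
  define a where "a = (\<lambda>i. fst (\<gamma> i))"
  define b where "b = (\<lambda>i. snd (\<gamma> i))"
  define r where "r = int R"
  have r0: "0 \<le> r" unfolding r_def by simp
  have a: "based_loop V E v0 a" unfolding a_def using proj_based1[OF g] .
  have b: "based_loop W F w0 b" unfolding b_def using proj_based2[OF g] .
  have ba: "bnd v0 a R" unfolding a_def using proj_bnd1[OF R] .
  have bb: "bnd w0 b R" unfolding b_def using proj_bnd2[OF R] .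
  have gab: "\<And>i. \<gamma> i = (a i, b i)" unfolding a_def b_def by simp
  define \<psi> where "\<psi> j = (\<lambda>i. (a (sf r (int j - r) i), b i))" for j :: nat
  have fam: "based_homotopic (cart_V V W) (cart_E E F) (v0, w0) (\<psi> 0) (\<psi> (4 * R))"
  proof (rule family)
    fix j assume j: "j \<le> 4 * R"
    define c where "c = int j - r"
    have c1: "- r \<le> c" and c2: "c \<le> 3 * r" using j unfolding c_def r_def by auto
    show "based_loop (cart_V V W) (cart_E E F) (v0, w0) (\<psi> j)"
      unfolding \<psi>_def c_def[symmetric]
    proof (rule based_loopI)
      fix i
      show "(a (sf r c i), b i) \<in> cart_V V W" using bl_V[OF a] bl_V[OF b] unfolding cart_V_def by auto
      show "adj_or_eq (cart_E E F) (a (sf r c i), b i) (a (sf r c (i + 1)), b (i + 1))"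
        using A1[OF r0, of c i]
      proof (elim disjE conjE)
        assume e: "sf r c (i + 1) = sf r c i"
        show ?thesis unfolding e by (rule lift2[OF bl_adj[OF b]])
      next
        assume e: "sf r c i = i" "sf r c (i + 1) = i + 1"
        show ?thesis unfolding e using bl_adj[OF g, of i] gab by simp
      next
        assume e: "sf r c i = i + 2 * r" "sf r c (i + 1) = i + 2 * r + 1"
        show ?thesis unfolding e unfolding r_def by (rule diag_step[OF a b ba bb])
      qed
    next
      show "bnd (v0, w0) (\<lambda>i. (a (sf r c i), b i)) (5 * R)"
        unfolding bnd_def
      proof (intro allI impI)
        fix i :: int assume "int (5 * R) \<le> \<bar>i\<bar>"
        hence "5 * r \<le> \<bar>i\<bar>" unfolding r_def by simp
        hence "r \<le> \<bar>sf r c i\<bar> \<and> r \<le> \<bar>i\<bar>" using A3[OF r0 c1 c2] by blast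
        thus "(a (sf r c i), b i) = (v0, w0)" using ba bb unfolding bnd_def r_def by auto
      qed
    qed
  next
    fix i j
    have e: "int (Suc j) - r = (int j - r) + 1" by simp
    have "adj_or_eq (cart_E E F) (a (sf r (int j - r) i), b i) (a (sf r (int j - r + 1) i), b i)"
      using A2[of r "int j - r" i]
    proof (elim disjE)
      assume e2: "sf r (int j - r + 1) i = sf r (int j - r) i"
      show ?thesis unfolding e2 adj_or_eq_def by simp
    next
      assume e2: "sf r (int j - r + 1) i = sf r (int j - r) i + 1"
      show ?thesis unfolding e2 by (rule lift1[OF bl_adj[OF a]])
    qed
    thus "adj_or_eq (cart_E E F) (\<psi> j i) (\<psi> (Suc j) i)" unfolding \<psi>_def e .
  qed
  have p0: "\<psi> 0 = \<gamma>"
  proof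
    fix i
    have "a (sf r (- r) i) = a i"
      using A4[OF r0, of i]
    proof (elim disjE conjE)
      assume "sf r (- r) i = i" thus ?thesis by simp
    next
      assume "sf r (- r) i \<le> - r" "i \<le> - r"
      hence "r \<le> \<bar>sf r (- r) i\<bar>" "r \<le> \<bar>i\<bar>" by auto
      thus ?thesis using ba unfolding bnd_def r_def by auto
    qed
    thus "\<psi> 0 i = \<gamma> i" unfolding \<psi>_def gab by simp
  qed
  have p1: "\<psi> (4 * R) = (\<lambda>i. (fst (\<gamma> (i + 2 * int R)), snd (\<gamma> i)))"
  proof
    fix i
    have e: "int (4 * R) - r = 3 * r" unfolding r_def by simp
    have "a (sf r (3 * r) i) = a (i + 2 * r)"
      using A5[OF r0, of i]
    proof (elim disjE conjE)
      assume "sf r (3 * r) i = i + 2 * r" thus ?thesis by simp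
    next
      assume "sf r (3 * r) i \<ge> r" "i + 2 * r \<ge> r"
      hence "r \<le> \<bar>sf r (3 * r) i\<bar>" "r \<le> \<bar>i + 2 * r\<bar>" by auto
      thus ?thesis using ba unfolding bnd_def r_def by auto
    qed
    thus "\<psi> (4 * R) i = (fst (\<gamma> (i + 2 * int R)), snd (\<gamma> i))"
      unfolding \<psi>_def e by (simp add: a_def b_def r_def)
  qed
  show ?thesis using fam unfolding p0 p1 .
qed



lemma inj_hmt:
  assumes sE: "\<forall>x y. E x y \<longrightarrow> E y x" and sF: "\<forall>x y. F x y \<longrightarrow> F y x"
    and g: "based_loop (cart_V V W) (cart_E E F) (v0, w0) \<gamma>"
    and d: "based_loop (cart_V V W) (cart_E E F) (v0, w0) \<delta>"
    and H1: "based_homotopic V E v0 (\<lambda>i. fst (\<gamma> i)) (\<lambda>i. fst (\<delta> i))"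
    and H2: "based_homotopic W F w0 (\<lambda>i. snd (\<gamma> i)) (\<lambda>i. snd (\<delta> i))"
  shows "based_homotopic (cart_V V W) (cart_E E F) (v0, w0) \<gamma> \<delta>"
proof -
  obtain m1 :: nat and h1 :: "int \<Rightarrow> nat \<Rightarrow> 'a" where h1: "\<forall>i. h1 i 0 = fst (\<gamma> i)"
    "\<forall>i. h1 i m1 = fst (\<delta> i)"
    "\<forall>j\<le>m1. based_loop V E v0 (\<lambda>i. h1 i j)" "\<forall>i. \<forall>j<m1. adj_or_eq E (h1 i j) (h1 i (Suc j))"
    using H1 unfolding based_homotopic_def by blast
  obtain m2 :: nat and h2 :: "int \<Rightarrow> nat \<Rightarrow> 'b" where h2: "\<forall>i. h2 i 0 = snd (\<gamma> i)"
    "\<forall>i. h2 i m2 = snd (\<delta> i)"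
    "\<forall>j\<le>m2. based_loop W F w0 (\<lambda>i. h2 i j)" "\<forall>i. \<forall>j<m2. adj_or_eq F (h2 i j) (h2 i (Suc j))"
    using H2 unfolding based_homotopic_def by blast
  obtain R1 where R1: "\<forall>j\<le>m1. bnd v0 (\<lambda>i. h1 i j) R1" using rows_bnd[OF h1(3)] by blast
  obtain R2 where R2: "\<forall>j\<le>m2. bnd w0 (\<lambda>i. h2 i j) R2" using rows_bnd[OF h2(3)] by blast
  define R where "R = R1 + R2 + loop_radius (v0, w0) \<gamma> + loop_radius (v0, w0) \<delta>"
  have bg: "bnd (v0, w0) \<gamma> R" using bnd_mono[OF based_bnd[OF g], of R] R_def by simp
  have bd: "bnd (v0, w0) \<delta> R" using bnd_mono[OF based_bnd[OF d], of R] R_def by simp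
  have bh1: "bnd v0 (\<lambda>i. h1 i j) R" if "j \<le> m1" for j
    using bnd_mono[of v0 "\<lambda>i. h1 i j" R1 R] R1 that R_def by simp
  have bh2: "bnd w0 (\<lambda>i. h2 i j) R" if "j \<le> m2" for j
    using bnd_mono[of w0 "\<lambda>i. h2 i j" R2 R] R2 that R_def by simp
  have gb2: "based_loop W F w0 (\<lambda>i. snd (\<gamma> i))" using proj_based2[OF g] .
  have db1: "based_loop V E v0 (\<lambda>i. fst (\<delta> i))" using proj_based1[OF d] .
  have s1: "based_homotopic (cart_V V W) (cart_E E F) (v0, w0) \<gamma>
           (\<lambda>i. (fst (\<gamma> (i + 2 * int R)), snd (\<gamma> i)))" using sep[OF g bg] .
  have s2: "based_homotopic (cart_V V W) (cart_E E F) (v0, w0) \<delta>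
           (\<lambda>i. (fst (\<delta> (i + 2 * int R)), snd (\<delta> i)))" using sep[OF d bd] .
  define \<psi> where "\<psi> j = (\<lambda>i. (h1 (i + 2 * int R) j, snd (\<gamma> i)))" for j
  have A: "based_homotopic (cart_V V W) (cart_E E F) (v0, w0) (\<psi> 0) (\<psi> m1)"
  proof (rule family)
    fix j assume j: "j \<le> m1"
    show "based_loop (cart_V V W) (cart_E E F) (v0, w0) (\<psi> j)"
      unfolding \<psi>_def
      using tau_based[of V E v0 "\<lambda>i. h1 i j" W F w0 "\<lambda>i. snd (\<gamma> i)" R] h1(3) j gb2 bh1[OF j]
        proj_bnd2[OF bg] by simp
  next
    fix i j assume "j < m1"
    thus "adj_or_eq (cart_E E F) (\<psi> j i) (\<psi> (Suc j) i)"
      unfolding \<psi>_def by (rule lift1[OF h1(4)[rule_format]])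
  qed
  have A0: "\<psi> 0 = (\<lambda>i. (fst (\<gamma> (i + 2 * int R)), snd (\<gamma> i)))" unfolding \<psi>_def using h1(1) by simp
  have A1: "\<psi> m1 = (\<lambda>i. (fst (\<delta> (i + 2 * int R)), snd (\<gamma> i)))" unfolding \<psi>_def using h1(2) by simp
  define \<phi> where "\<phi> j = (\<lambda>i. (fst (\<delta> (i + 2 * int R)), h2 i j))" for j
  have B: "based_homotopic (cart_V V W) (cart_E E F) (v0, w0) (\<phi> 0) (\<phi> m2)"
  proof (rule family)
    fix j assume j: "j \<le> m2"
    show "based_loop (cart_V V W) (cart_E E F) (v0, w0) (\<phi> j)"
      unfolding \<phi>_def
      using tau_based[of V E v0 "\<lambda>i. fst (\<delta> i)" W F w0 "\<lambda>i. h2 i j" R] h2(3) j db1 bh2[OF j]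
        proj_bnd1[OF bd] by simp
  next
    fix i j assume "j < m2"
    thus "adj_or_eq (cart_E E F) (\<phi> j i) (\<phi> (Suc j) i)"
      unfolding \<phi>_def by (rule lift2[OF h2(4)[rule_format]])
  qed
  have B0: "\<phi> 0 = (\<lambda>i. (fst (\<delta> (i + 2 * int R)), snd (\<gamma> i)))" unfolding \<phi>_def using h2(1) by simp
  have B1: "\<phi> m2 = (\<lambda>i. (fst (\<delta> (i + 2 * int R)), snd (\<delta> i)))" unfolding \<phi>_def using h2(2) by simp
  have sP: "\<forall>x y. cart_E E F x y \<longrightarrow> cart_E E F y x" using sym_cart[OF sE sF] .
  show ?thesis
    using hmt_trans[OF hmt_trans[OF hmt_trans[OF s1 A[unfolded A0 A1]] B[unfolded B0 B1]] hmt_sym[OF sP s2]] .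
qed



theorem lemma4p4:
  fixes V :: "'a set" and E :: "'a \<Rightarrow> 'a \<Rightarrow> bool"
    and W :: "'b set" and F :: "'b \<Rightarrow> 'b \<Rightarrow> bool"
    and v0 :: 'a and w0 :: 'b
  assumes "graph V E" and "graph W F"
    and "v0 \<in> V" and "w0 \<in> W"
  shows "A1 (cart_V V W) (cart_E E F) (v0, w0) \<cong> A1 V E v0 \<times>\<times> A1 W F w0"
proof -
  have sE: "\<forall>x y. E x y \<longrightarrow> E y x" using assms(1) unfolding graph_def simple_graph_def by blast
  have sF: "\<forall>x y. F x y \<longrightarrow> F y x" using assms(2) unfolding graph_def simple_graph_def by blast
  have sP: "\<forall>x y. cart_E E F x y \<longrightarrow> cart_E E F y x" using sym_cart[OF sE sF] .
  let ?P = "cart_V V W" and ?EP = "cart_E E F" and ?b = "(v0, w0)"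
  let ?A = "A1 ?P ?EP ?b" and ?B = "A1 V E v0 \<times>\<times> A1 W F w0"
  define \<Phi> where "\<Phi> X = (loop_class V E v0 (\<lambda>i. fst ((SOME f. f \<in> X) i)),
                          loop_class W F w0 (\<lambda>i. snd ((SOME f. f \<in> X) i)))" for X
  have carA: "carrier ?A = loop_class ?P ?EP ?b ` {f. based_loop ?P ?EP ?b f}"
    by (simp add: A1_def)
  have carB: "carrier ?B = (loop_class V E v0 ` {f. based_loop V E v0 f}) \<times>
                           (loop_class W F w0 ` {f. based_loop W F w0 f})"
    by (simp add: A1_def DirProd_def)
  have repA: "based_loop ?P ?EP ?b (SOME f. f \<in> loop_class ?P ?EP ?b \<gamma>)"
    "based_homotopic ?P ?EP ?b \<gamma> (SOME f. f \<in> loop_class ?P ?EP ?b \<gamma>)"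
    if "based_loop ?P ?EP ?b \<gamma>" for \<gamma>
  proof -
    have h: "based_homotopic ?P ?EP ?b \<gamma> (SOME f. f \<in> loop_class ?P ?EP ?b \<gamma>)"
      using rep_class[OF that] .
    show "based_homotopic ?P ?EP ?b \<gamma> (SOME f. f \<in> loop_class ?P ?EP ?b \<gamma>)" using h .
    show "based_loop ?P ?EP ?b (SOME f. f \<in> loop_class ?P ?EP ?b \<gamma>)" using hmt_based[OF h] by simp
  qed
  have Phi_class: "\<Phi> (loop_class ?P ?EP ?b \<gamma>) =
      (loop_class V E v0 (\<lambda>i. fst (\<gamma> i)), loop_class W F w0 (\<lambda>i. snd (\<gamma> i)))"
    if g: "based_loop ?P ?EP ?b \<gamma>" for \<gamma>
  proof -
    define \<rho> where "\<rho> = (SOME f. f \<in> loop_class ?P ?EP ?b \<gamma>)"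
    have h: "based_homotopic ?P ?EP ?b \<gamma> \<rho>" unfolding \<rho>_def using repA(2)[OF g] .
    have "loop_class V E v0 (\<lambda>i. fst (\<gamma> i)) = loop_class V E v0 (\<lambda>i. fst (\<rho> i))"
      using class_eq[OF sE proj_hmt1[OF h]] .
    moreover have "loop_class W F w0 (\<lambda>i. snd (\<gamma> i)) = loop_class W F w0 (\<lambda>i. snd (\<rho> i))"
      using class_eq[OF sF proj_hmt2[OF h]] .
    ultimately show ?thesis unfolding \<Phi>_def \<rho>_def by simp
  qed
  have into: "\<Phi> X \<in> carrier ?B" if XA: "X \<in> carrier ?A" for X
  proof -
    obtain \<gamma> where g: "based_loop ?P ?EP ?b \<gamma>" and X: "X = loop_class ?P ?EP ?b \<gamma>"
      using XA carA by auto
    show ?thesis unfolding X Phi_class[OF g] carB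
      using proj_based1[OF g] proj_based2[OF g] by blast
  qed
  have mult: "\<Phi> (X \<otimes>\<^bsub>?A\<^esub> Y) = \<Phi> X \<otimes>\<^bsub>?B\<^esub> \<Phi> Y"
    if X: "X \<in> carrier ?A" and Y: "Y \<in> carrier ?A" for X Y
  proof -
    obtain \<gamma> where g: "based_loop ?P ?EP ?b \<gamma>" and Xe: "X = loop_class ?P ?EP ?b \<gamma>"
      using X carA by auto
    obtain \<delta> where d: "based_loop ?P ?EP ?b \<delta>" and Ye: "Y = loop_class ?P ?EP ?b \<delta>"
      using Y carA by auto
    define f where "f = (SOME f. f \<in> X)"
    define g' where "g' = (SOME f. f \<in> Y)"
    have fb: "based_loop ?P ?EP ?b f" unfolding f_def Xe using repA(1)[OF g] .
    have gb: "based_loop ?P ?EP ?b g'" unfolding g'_def Ye using repA(1)[OF d] .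
    have XY: "X \<otimes>\<^bsub>?A\<^esub> Y = loop_class ?P ?EP ?b (loop_concat ?b f g')"
      unfolding f_def g'_def by (simp add: A1_def)
    have cb: "based_loop ?P ?EP ?b (loop_concat ?b f g')" using concat_based[OF fb gb] .
    have PX: "\<Phi> X = (loop_class V E v0 (\<lambda>i. fst (f i)), loop_class W F w0 (\<lambda>i. snd (f i)))"
      unfolding \<Phi>_def f_def ..
    have PY: "\<Phi> Y = (loop_class V E v0 (\<lambda>i. fst (g' i)), loop_class W F w0 (\<lambda>i. snd (g' i)))"
      unfolding \<Phi>_def g'_def ..
    have f1: "based_loop V E v0 (\<lambda>i. fst (f i))" using proj_based1[OF fb] .
    have g1: "based_loop V E v0 (\<lambda>i. fst (g' i))" using proj_based1[OF gb] .
    have f2: "based_loop W F w0 (\<lambda>i. snd (f i))" using proj_based2[OF fb] .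
    have g2: "based_loop W F w0 (\<lambda>i. snd (g' i))" using proj_based2[OF gb] .
    have e1: "loop_class V E v0 (\<lambda>i. fst (loop_concat ?b f g' i)) =
       loop_class V E v0 (loop_concat v0 (SOME x. x \<in> loop_class V E v0 (\<lambda>i. fst (f i)))
                                          (SOME x. x \<in> loop_class V E v0 (\<lambda>i. fst (g' i))))"
      using class_eq[OF sE hmt_trans[OF proj_concat1[OF sE fb gb]
          cong[OF sE rep_class[OF f1] rep_class[OF g1]]]] .
    have e2: "loop_class W F w0 (\<lambda>i. snd (loop_concat ?b f g' i)) =
       loop_class W F w0 (loop_concat w0 (SOME x. x \<in> loop_class W F w0 (\<lambda>i. snd (f i)))
                                          (SOME x. x \<in> loop_class W F w0 (\<lambda>i. snd (g' i))))"
      using class_eq[OF sF hmt_trans[OF proj_concat2[OF sF fb gb]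
          cong[OF sF rep_class[OF f2] rep_class[OF g2]]]] .
    show ?thesis unfolding XY Phi_class[OF cb] PX PY
      by (simp add: DirProd_def A1_def e1 e2)
  qed
  have hom: "\<Phi> \<in> hom ?A ?B" unfolding hom_def using into mult by auto
  have surj: "\<Phi> ` carrier ?A = carrier ?B"
  proof
    show "\<Phi> ` carrier ?A \<subseteq> carrier ?B" by (rule image_subsetI, rule into)
  next
    show "carrier ?B \<subseteq> \<Phi> ` carrier ?A"
    proof
      fix Z assume "Z \<in> carrier ?B"
      then obtain a b where a: "based_loop V E v0 a" and b: "based_loop W F w0 b"
        and Z: "Z = (loop_class V E v0 a, loop_class W F w0 b)" unfolding carB by auto
      define R where "R = loop_radius v0 a + loop_radius w0 b"
      have ba: "bnd v0 a R" using bnd_mono[OF based_bnd[OF a], of R] R_def by simp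
      have bb: "bnd w0 b R" using bnd_mono[OF based_bnd[OF b], of R] R_def by simp
      define \<tau> where "\<tau> = (\<lambda>i. (a (i + 2 * int R), b i))"
      have t: "based_loop ?P ?EP ?b \<tau>" unfolding \<tau>_def using tau_based[OF a b ba bb] .
      have sh: "based_homotopic V E v0 a (\<lambda>i. a (i + 2 * int R))"
        using shift[OF a, of "2 * R"] by simp
      have "\<Phi> (loop_class ?P ?EP ?b \<tau>) = (loop_class V E v0 (\<lambda>i. a (i + 2 * int R)), loop_class W F w0 b)"
        unfolding Phi_class[OF t] by (simp add: \<tau>_def)
      also have "\<dots> = Z" unfolding Z using class_eq[OF sE sh] by simp
      finally have "\<Phi> (loop_class ?P ?EP ?b \<tau>) = Z" .
      moreover have "loop_class ?P ?EP ?b \<tau> \<in> carrier ?A" unfolding carA using t by blast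
      ultimately show "Z \<in> \<Phi> ` carrier ?A" by blast
    qed
  qed
  have inj: "inj_on \<Phi> (carrier ?A)"
  proof (rule inj_onI)
    fix X Y assume X: "X \<in> carrier ?A" and Y: "Y \<in> carrier ?A" and e: "\<Phi> X = \<Phi> Y"
    obtain \<gamma> where g: "based_loop ?P ?EP ?b \<gamma>" and Xe: "X = loop_class ?P ?EP ?b \<gamma>"
      using X carA by auto
    obtain \<delta> where d: "based_loop ?P ?EP ?b \<delta>" and Ye: "Y = loop_class ?P ?EP ?b \<delta>"
      using Y carA by auto
    have e': "loop_class V E v0 (\<lambda>i. fst (\<gamma> i)) = loop_class V E v0 (\<lambda>i. fst (\<delta> i))"
      "loop_class W F w0 (\<lambda>i. snd (\<gamma> i)) = loop_class W F w0 (\<lambda>i. snd (\<delta> i))"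
      using e unfolding Xe Ye Phi_class[OF g] Phi_class[OF d] by auto
    have H1: "based_homotopic V E v0 (\<lambda>i. fst (\<gamma> i)) (\<lambda>i. fst (\<delta> i))"
      using class_eqD[OF proj_based1[OF d] e'(1)] .
    have H2: "based_homotopic W F w0 (\<lambda>i. snd (\<gamma> i)) (\<lambda>i. snd (\<delta> i))"
      using class_eqD[OF proj_based2[OF d] e'(2)] .
    show "X = Y" unfolding Xe Ye using class_eq[OF sP inj_hmt[OF sE sF g d H1 H2]] .
  qed
  have "\<Phi> \<in> iso ?A ?B" unfolding iso_iff using hom surj inj by blast
  thus ?thesis by (rule is_isoI)
qed


end
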